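(* For every regular $\Delta$-matroid $D=(E,\mathcal{B})$, the basis generating polynomial $g_D=\sum_{B\in\mathcal{B}}\prod_{e\in B}x_e$ is Hurwitz stable.
   Context: A $\Delta$-matroid is a pair $(E,\mathcal{B})$, $E$ finite, $\mathcal{B}$ a nonempty family of subsets, such that for all $B,B'\in\mathcal{B}$ and $x\in B\triangle B'$ there is $y\in B\triangle B'$ with $B\triangle\{x,y\}\in\mathcal{B}$; it is even if all bases have the same parity. For a symmetric or skew-symmetric matrix $\mathbf{A}$ over a field $K$ indexed by $E$, $D(\mathbf{A})=(E,\{I:\mathbf{A}[I]\text{ nonsingular}\})$ (empty submatrix nonsingular); the twist $D*X$ has bases $\{B\triangle X\}$. $D$ is representable over $K$ if $D=D(\mathbf{A})*X$ for such $\mathbf{A}$ over $K$ and some $X$. $D$ is regular if it is even and representable over every field (equivalently, $D=D(\mathbf{A})*X$ for a real skew-symmetric $\mathbf{A}$ with all principal minors in $\{0,\pm1\}$). A polynomial is Hurwitz stable if it does not vanish when all variables have positive real part. *)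

theory Defs
  imports "HOL-Analysis.Analysis" "HOL-Combinatorics.Permutations"
begin

definition delta_matroid :: "'a set \<Rightarrow> 'a set set \<Rightarrow> bool" where
  "delta_matroid E Bs \<longleftrightarrow> finite E \<and> Bs \<noteq> {} \<and> (\<forall>B\<in>Bs. B \<subseteq> E) \<and>
     (\<forall>B\<in>Bs. \<forall>B'\<in>Bs. \<forall>x \<in> (B - B') \<union> (B' - B).
        \<exists>y \<in> (B - B') \<union> (B' - B).
          (let xy = {x, y} in (B - xy) \<union> (xy - B)) \<in> Bs)"

definition even_delta_matroid :: "'a set \<Rightarrow> 'a set set \<Rightarrow> bool" where
  "even_delta_matroid E Bs \<longleftrightarrow> delta_matroid E Bs \<and>
     (\<forall>B\<in>Bs. \<forall>B'\<in>Bs. even (card B) = even (card B'))"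

definition principal_minor :: "('a \<Rightarrow> 'a \<Rightarrow> 'r::comm_ring_1) \<Rightarrow> 'a set \<Rightarrow> 'r" where
  "principal_minor A I = (\<Sum>p \<in> {p. p permutes I}. of_int (sign p) * (\<Prod>i\<in>I. A i (p i)))"

definition twist :: "'a set set \<Rightarrow> 'a set \<Rightarrow> 'a set set" where
  "twist Bs X = (\<lambda>B. (B - X) \<union> (X - B)) ` Bs"

definition DA_bases :: "'a set \<Rightarrow> ('a \<Rightarrow> 'a \<Rightarrow> 'r::comm_ring_1) \<Rightarrow> 'a set set" where
  "DA_bases E A = {I. I \<subseteq> E \<and> principal_minor A I \<noteq> 0}"

definition regular_delta_matroid :: "'a set \<Rightarrow> 'a set set \<Rightarrow> bool" where
  "regular_delta_matroid E Bs \<longleftrightarrow> even_delta_matroid E Bs \<and>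
     (\<exists>(A :: 'a \<Rightarrow> 'a \<Rightarrow> real) X.
        (\<forall>i\<in>E. \<forall>j\<in>E. A i j = - A j i) \<and>
        (\<forall>I. I \<subseteq> E \<longrightarrow> principal_minor A I \<in> {0, 1, -1}) \<and>
        Bs = twist (DA_bases E A) X)"

definition basis_gen_poly :: "'a set set \<Rightarrow> ('a \<Rightarrow> complex) \<Rightarrow> complex" where
  "basis_gen_poly Bs x = (\<Sum>B\<in>Bs. \<Prod>e\<in>B. x e)"

definition hurwitz_stable :: "'a set \<Rightarrow> (('a \<Rightarrow> complex) \<Rightarrow> complex) \<Rightarrow> bool" where
  "hurwitz_stable E g \<longleftrightarrow> (\<forall>x. (\<forall>e\<in>E. 0 < Re (x e)) \<longrightarrow> g x \<noteq> 0)"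

end

theory Submission
  imports Defs "Jordan_Normal_Form.Determinant"
begin

lemma pm_expand:
  fixes A :: "'a \<Rightarrow> 'a \<Rightarrow> 'r::comm_ring_1"
  assumes fin: "finite S"
  shows "principal_minor (\<lambda>i j. (if i = j then z i else 0) + A i j) S
       = (\<Sum>J\<in>Pow S. principal_minor A J * (\<Prod>i\<in>S-J. z i))"
proof -
  have "principal_minor (\<lambda>i j. (if i = j then z i else 0) + A i j) S
      = (\<Sum>p\<in>{p. p permutes S}. \<Sum>J\<in>Pow S. of_int (sign p) * ((\<Prod>i\<in>J. A i (p i)) * (\<Prod>i\<in>S-J. (if i = p i then z i else 0))))"
    unfolding principal_minor_def
    by (intro sum.cong refl) (simp add: add.commute[of "if _ then _ else _"] prod_add[OF fin] sum_distrib_left)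
  also have "\<dots> = (\<Sum>J\<in>Pow S. \<Sum>p\<in>{p. p permutes S}. of_int (sign p) * ((\<Prod>i\<in>J. A i (p i)) * (\<Prod>i\<in>S-J. (if i = p i then z i else 0))))"
    by (rule sum.swap)
  also have "\<dots> = (\<Sum>J\<in>Pow S. principal_minor A J * (\<Prod>i\<in>S-J. z i))"
  proof (intro sum.cong refl)
    fix J assume J: "J \<in> Pow S"
    have finp: "finite {p. p permutes S}" using fin by (simp add: finite_permutations)
    have sub: "{p. p permutes J} \<subseteq> {p. p permutes S}" using J permutes_subset by auto
    have "(\<Sum>p\<in>{p. p permutes S}. of_int (sign p) * ((\<Prod>i\<in>J. A i (p i)) * (\<Prod>i\<in>S-J. (if i = p i then z i else 0))))
        = (\<Sum>p\<in>{p. p permutes J}. of_int (sign p) * ((\<Prod>i\<in>J. A i (p i)) * (\<Prod>i\<in>S-J. (if i = p i then z i else 0))))"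
    proof (rule sum.mono_neutral_right[OF finp sub], rule ballI)
      fix p assume pp: "p \<in> {p. p permutes S} - {p. p permutes J}"
      hence p: "p permutes S" and np: "\<not> p permutes J" by auto
      have "\<exists>i\<in>S-J. p i \<noteq> i"
      proof (rule ccontr)
        assume "\<not> ?thesis"
        hence "\<forall>i. i \<notin> J \<longrightarrow> p i = i" using p by (metis DiffI permutes_not_in)
        hence "p permutes J" using p unfolding permutes_def by blast
        with np show False by simp
      qed
      then obtain i where "i \<in> S - J" "p i \<noteq> i" by blast
      hence "(\<Prod>i\<in>S-J. (if i = p i then z i else 0)) = 0"
        using fin by (intro prod_zero bexI[of _ i]) auto
      thus "of_int (sign p) * ((\<Prod>i\<in>J. A i (p i)) * (\<Prod>i\<in>S-J. (if i = p i then z i else 0))) = 0" by simp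
    qed
    also have "\<dots> = (\<Sum>p\<in>{p. p permutes J}. of_int (sign p) * (\<Prod>i\<in>J. A i (p i))) * (\<Prod>i\<in>S-J. z i)"
      unfolding sum_distrib_right
    proof (intro sum.cong refl)
      fix p assume "p \<in> {p. p permutes J}"
      hence "\<And>i. i \<in> S - J \<Longrightarrow> p i = i" by (auto simp: permutes_not_in)
      hence "(\<Prod>i\<in>S-J. (if i = p i then z i else 0)) = (\<Prod>i\<in>S-J. z i)" by (intro prod.cong) auto
      thus "of_int (sign p) * ((\<Prod>i\<in>J. A i (p i)) * (\<Prod>i\<in>S-J. (if i = p i then z i else 0))) = of_int (sign p) * (\<Prod>i\<in>J. A i (p i)) * (\<Prod>i\<in>S-J. z i)"
        by (simp add: mult.assoc)
    qed
    finally show "(\<Sum>p\<in>{p. p permutes S}. of_int (sign p) * ((\<Prod>i\<in>J. A i (p i)) * (\<Prod>i\<in>S-J. (if i = p i then z i else 0))))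
        = principal_minor A J * (\<Prod>i\<in>S-J. z i)" unfolding principal_minor_def .
  qed
  finally show ?thesis .
qed


lemma pm_kernel:
  fixes M :: "'a \<Rightarrow> 'a \<Rightarrow> 'r::field"
  assumes fin: "finite S" and z: "principal_minor M S = 0"
  shows "\<exists>v. (\<exists>i\<in>S. v i \<noteq> 0) \<and> (\<forall>i\<in>S. (\<Sum>j\<in>S. M i j * v j) = 0)"
proof -
  define n where "n = card S"
  obtain f where f: "bij_betw f {0..<n} S" using ex_bij_betw_nat_finite[OF fin] n_def by blast
  define g where "g = inv_into {0..<n} f"
  have gf: "\<And>i. i \<in> {0..<n} \<Longrightarrow> g (f i) = i" unfolding g_def using f by (simp add: bij_betw_inv_into_left)
  have fg: "\<And>a. a \<in> S \<Longrightarrow> f (g a) = a" unfolding g_def using f by (simp add: bij_betw_inv_into_right)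
  have g: "bij_betw g S {0..<n}" unfolding g_def using f by (simp add: bij_betw_inv_into)
  have injf: "inj_on f {0..<n}" using f by (simp add: bij_betw_def)
  define Am where "Am = mat n n (\<lambda>(i,j). M (f i) (f j))"
  have Am: "Am \<in> carrier_mat n n" unfolding Am_def by simp
  have "det Am = (\<Sum>p\<in>{p. p permutes {0..<n}}. of_int (sign p) * (\<Prod>i\<in>{0..<n}. M (f i) (f (p i))))"
    unfolding det_def'[OF Am] by (intro sum.cong refl prod.cong) (auto simp: Am_def permutes_in_image)
  also have "\<dots> = principal_minor M S"
    unfolding principal_minor_def
  proof (rule sum.reindex_bij_witness[where i = "map_permutation S g" and j = "map_permutation {0..<n} f"])
    fix p assume "p \<in> {p. p permutes {0..<n}}"
    hence p: "p permutes {0..<n}" by simp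
    show "map_permutation S g (map_permutation {0..<n} f p) = p"
      by (rule map_permutation_compose_inv[OF f p gf])
    show "map_permutation {0..<n} f p \<in> {p. p permutes S}"
      using map_permutation_permutes[OF f p] by simp
    have "(\<Prod>a\<in>S. M a (map_permutation {0..<n} f p a)) = (\<Prod>i\<in>{0..<n}. M (f i) (map_permutation {0..<n} f p (f i)))"
      using prod.reindex_bij_betw[OF f, of "\<lambda>a. M a (map_permutation {0..<n} f p a)"] by simp
    also have "\<dots> = (\<Prod>i\<in>{0..<n}. M (f i) (f (p i)))"
      by (intro prod.cong refl) (simp add: map_permutation_apply[OF injf])
    finally show "of_int (sign (map_permutation {0..<n} f p)) * (\<Prod>a\<in>S. M a (map_permutation {0..<n} f p a))
       = of_int (sign p) * (\<Prod>i\<in>{0..<n}. M (f i) (f (p i)))"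
      using sign_map_permutation[OF injf p] by simp
  next
    fix q assume "q \<in> {p. p permutes S}"
    hence q: "q permutes S" by simp
    show "map_permutation {0..<n} f (map_permutation S g q) = q"
      by (rule map_permutation_compose_inv[OF g q fg])
    show "map_permutation S g q \<in> {p. p permutes {0..<n}}"
      using map_permutation_permutes[OF g q] by simp
  qed
  finally have "det Am = 0" using z by simp
  then obtain v where v: "v \<in> carrier_vec n" "v \<noteq> 0\<^sub>v n" "Am *\<^sub>v v = 0\<^sub>v n"
    using det_0_iff_vec_prod_zero_field[OF Am] by blast
  define w where "w = (\<lambda>a. v $ (g a))"
  obtain k where k: "k < n" "v $ k \<noteq> 0" using v(1,2) by (auto simp: vec_eq_iff)
  have fk: "f k \<in> S" using f k(1) by (auto simp: bij_betw_def)
  have "w (f k) \<noteq> 0" unfolding w_def using gf k by simp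
  moreover have "\<forall>a\<in>S. (\<Sum>j\<in>S. M a j * w j) = 0"
  proof
    fix a assume a: "a \<in> S"
    have ga: "g a < n" using g a by (auto simp: bij_betw_def)
    have "(\<Sum>j\<in>S. M a j * w j) = (\<Sum>i\<in>{0..<n}. M a (f i) * w (f i))"
      using sum.reindex_bij_betw[OF f, of "\<lambda>j. M a j * w j"] by simp
    also have "\<dots> = (\<Sum>i\<in>{0..<n}. Am $$ (g a, i) * v $ i)"
      by (intro sum.cong refl) (simp add: Am_def w_def gf fg a ga)
    also have "\<dots> = (Am *\<^sub>v v) $ (g a)"
      using Am v(1) ga by (simp add: scalar_prod_def)
    also have "\<dots> = 0" using v(3) ga by simp
    finally show "(\<Sum>j\<in>S. M a j * w j) = 0" .
  qed
  ultimately show ?thesis using fk by blast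
qed


lemma pm_nonzero:
  fixes A :: "'a \<Rightarrow> 'a \<Rightarrow> real" and z :: "'a \<Rightarrow> complex"
  assumes fin: "finite S" and skew: "\<forall>i\<in>S. \<forall>j\<in>S. A i j = - A j i"
    and pos: "\<forall>i\<in>S. 0 < Re (z i)"
  shows "principal_minor (\<lambda>i j. (if i = j then z i else 0) + complex_of_real (A i j)) S \<noteq> 0"
proof
  define M where "M = (\<lambda>i j. (if i = j then z i else 0) + complex_of_real (A i j))"
  assume "principal_minor (\<lambda>i j. (if i = j then z i else 0) + complex_of_real (A i j)) S = 0"
  then obtain v where v: "\<exists>i\<in>S. v i \<noteq> 0" and ker: "\<forall>i\<in>S. (\<Sum>j\<in>S. M i j * v j) = 0"
    using pm_kernel[OF fin] unfolding M_def by blast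
  define T where "T = (\<Sum>i\<in>S. \<Sum>j\<in>S. cnj (v i) * complex_of_real (A i j) * v j)"
  have "cnj T = (\<Sum>i\<in>S. \<Sum>j\<in>S. v i * complex_of_real (A i j) * cnj (v j))"
    unfolding T_def by simp
  also have "\<dots> = (\<Sum>j\<in>S. \<Sum>i\<in>S. v i * complex_of_real (A i j) * cnj (v j))"
    by (rule sum.swap)
  also have "\<dots> = (\<Sum>j\<in>S. \<Sum>i\<in>S. - (cnj (v j) * complex_of_real (A j i) * v i))"
  proof (intro sum.cong refl)
    fix i j assume "i \<in> S" "j \<in> S"
    hence e: "A i j = - A j i" using skew by blast
    show "v j * complex_of_real (A j i) * cnj (v i) = - (cnj (v i) * complex_of_real (A i j) * v j)"
      unfolding e by (simp add: algebra_simps)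
  qed
  also have "\<dots> = - T" unfolding T_def by (simp add: sum_negf)
  finally have cT: "cnj T = - T" .
  have ReT: "Re T = 0" using arg_cong[OF cT, of Re] by simp
  have "0 = (\<Sum>i\<in>S. cnj (v i) * (\<Sum>j\<in>S. M i j * v j))" using ker by simp
  also have "\<dots> = (\<Sum>i\<in>S. z i * (cnj (v i) * v i)) + T"
  proof -
    have "\<And>i. i \<in> S \<Longrightarrow> cnj (v i) * (\<Sum>j\<in>S. M i j * v j) = z i * (cnj (v i) * v i) + (\<Sum>j\<in>S. cnj (v i) * complex_of_real (A i j) * v j)"
    proof -
      fix i assume i: "i \<in> S"
      have "(\<Sum>j\<in>S. M i j * v j) = (\<Sum>j\<in>S. (if i = j then z i * v j else 0)) + (\<Sum>j\<in>S. complex_of_real (A i j) * v j)"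
        unfolding M_def sum.distrib[symmetric] by (intro sum.cong refl) (auto simp: algebra_simps)
      also have "(\<Sum>j\<in>S. (if i = j then z i * v j else 0)) = z i * v i"
        using fin i by (simp add: sum.delta)
      finally show "cnj (v i) * (\<Sum>j\<in>S. M i j * v j) = z i * (cnj (v i) * v i) + (\<Sum>j\<in>S. cnj (v i) * complex_of_real (A i j) * v j)"
        by (simp add: algebra_simps sum_distrib_left)
    qed
    thus ?thesis unfolding T_def sum.distrib[symmetric] by (intro sum.cong refl) auto
  qed
  finally have "0 = Re ((\<Sum>i\<in>S. z i * (cnj (v i) * v i)) + T)" by simp
  also have "\<dots> = (\<Sum>i\<in>S. Re (z i) * (Re (v i) * Re (v i) + Im (v i) * Im (v i)))"
    using ReT by (simp add: Re_sum)
  also have "\<dots> > 0"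
  proof -
    obtain k where k: "k \<in> S" "v k \<noteq> 0" using v by blast
    have "0 < Re (v k) * Re (v k) + Im (v k) * Im (v k)"
      using k(2) by (simp add: complex_eq_iff sum_squares_gt_zero_iff)
    hence "0 < Re (z k) * (Re (v k) * Re (v k) + Im (v k) * Im (v k))" using pos k(1) by simp
    moreover have "\<forall>i\<in>S. 0 \<le> Re (z i) * (Re (v i) * Re (v i) + Im (v i) * Im (v i))"
      using pos by (simp add: less_imp_le)
    ultimately show ?thesis
      using k fin by (intro sum_pos2[of S k]) auto
  qed
  finally show False by simp
qed


lemma pm_of_real:
  fixes B :: "'a \<Rightarrow> 'a \<Rightarrow> real"
  shows "principal_minor (\<lambda>i j. complex_of_real (B i j)) J = complex_of_real (principal_minor B J)"
  unfolding principal_minor_def by (simp add: of_real_sum of_real_prod)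

lemma pm_scale:
  fixes A :: "'a \<Rightarrow> 'a \<Rightarrow> 'r::comm_ring_1"
  assumes "finite J"
  shows "principal_minor (\<lambda>i j. c * A i j) J = c ^ card J * principal_minor A J"
  unfolding principal_minor_def sum_distrib_left
  using assms by (intro sum.cong refl) (simp add: prod.distrib algebra_simps)

lemma pm_empty: "principal_minor A {} = 1"
  unfolding principal_minor_def by simp

lemma pm_nonneg:
  fixes A :: "'a \<Rightarrow> 'a \<Rightarrow> real"
  assumes fin: "finite I" and skew: "\<forall>i\<in>I. \<forall>j\<in>I. A i j = - A j i"
  shows "principal_minor A I \<ge> 0"
proof (rule ccontr)
  assume neg: "\<not> principal_minor A I \<ge> 0"
  define \<phi> where "\<phi> = (\<lambda>u::real. \<Sum>J\<in>Pow I. u ^ card J * principal_minor A J * (1 - u) ^ card (I - J))"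
  have cont: "continuous_on {0..1} \<phi>" unfolding \<phi>_def by (intro continuous_intros)
  have "\<phi> 0 = (\<Sum>J\<in>Pow I. if J = {} then 1 else 0)"
    unfolding \<phi>_def
  proof (intro sum.cong refl)
    fix J assume J: "J \<in> Pow I"
    hence "finite J" using fin finite_subset by auto
    thus "(0::real) ^ card J * principal_minor A J * (1 - 0) ^ card (I - J) = (if J = {} then 1 else 0)"
      by (auto simp: pm_empty)
  qed
  hence phi0: "\<phi> 0 = 1" using fin by (simp add: sum.delta)
  have "\<phi> 1 = (\<Sum>J\<in>Pow I. if J = I then principal_minor A I else 0)"
    unfolding \<phi>_def
  proof (intro sum.cong refl)
    fix J assume J: "J \<in> Pow I"
    hence "finite (I - J)" "J \<subseteq> I" using fin by auto
    moreover have "J \<noteq> I \<Longrightarrow> I - J \<noteq> {}" using J by auto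
    ultimately have "J \<noteq> I \<Longrightarrow> card (I - J) \<noteq> 0" by simp
    thus "(1::real) ^ card J * principal_minor A J * (1 - 1) ^ card (I - J) = (if J = I then principal_minor A I else 0)"
      by (cases "J = I") simp_all
  qed
  also have "\<dots> = principal_minor A I"
    using sum.delta[of "Pow I" I "\<lambda>_. principal_minor A I"] fin by simp
  finally have phi1: "\<phi> 1 = principal_minor A I" .
  have nz: "\<phi> u \<noteq> 0" if u: "0 < u" "u < 1" for u
  proof -
    have sk: "\<forall>i\<in>I. \<forall>j\<in>I. u * A i j = - (u * A j i)" using skew by (metis mult_minus_right)
    have pos: "\<forall>i\<in>I. 0 < Re ((\<lambda>_. complex_of_real (1 - u)) i)" using u by simp
    have "complex_of_real (\<phi> u) = (\<Sum>J\<in>Pow I. principal_minor (\<lambda>i j. complex_of_real (u * A i j)) J * (\<Prod>i\<in>I-J. complex_of_real (1 - u)))"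
      unfolding \<phi>_def of_real_sum
    proof (intro sum.cong refl)
      fix J assume J: "J \<in> Pow I"
      hence "finite J" using fin finite_subset by auto
      thus "complex_of_real (u ^ card J * principal_minor A J * (1 - u) ^ card (I - J)) =
         principal_minor (\<lambda>i j. complex_of_real (u * A i j)) J * (\<Prod>i\<in>I - J. complex_of_real (1 - u))"
        by (simp add: pm_of_real pm_scale)
    qed
    also have "\<dots> = principal_minor (\<lambda>i j. (if i = j then complex_of_real (1 - u) else 0) + complex_of_real (u * A i j)) I"
      by (rule pm_expand[OF fin, symmetric])
    also have "\<dots> \<noteq> 0"
      using pm_nonzero[OF fin sk pos] by simp
    finally show ?thesis by simp
  qed
  obtain x where x: "0 \<le> x" "x \<le> 1" "\<phi> x = 0"
    using IVT2'[of \<phi> 1 0 0, OF _ _ _ cont] phi0 phi1 neg by auto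
  moreover have "x \<noteq> 0" "x \<noteq> 1" using x phi0 phi1 neg by auto
  ultimately show False using nz by force
qed


lemma twist_term:
  fixes x :: "'a \<Rightarrow> complex"
  assumes fin: "finite E" and J: "J \<subseteq> E" and X: "X \<subseteq> E" and nz: "\<forall>e\<in>E. x e \<noteq> 0"
  shows "(\<Prod>e\<in>(J - X) \<union> (X - J). x e) = (\<Prod>e\<in>E - X. x e) * (\<Prod>e\<in>E - J. (if e \<in> X then x e else 1 / x e))"
proof -
  have f: "finite (J - X)" "finite (X - J)" "finite (E - X - J)" using fin J X by (auto intro: finite_subset)
  have e1: "E - J = (X - J) \<union> (E - X - J)" using X by blast
  have e2: "E - X = (J - X) \<union> (E - X - J)" using J by blast
  have "(\<Prod>e\<in>E - J. (if e \<in> X then x e else 1 / x e)) = (\<Prod>e\<in>X - J. x e) * (\<Prod>e\<in>E - X - J. 1 / x e)"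
    unfolding e1 by (subst prod.union_disjoint) (use f in \<open>auto intro!: arg_cong2[where f = "(*)"] prod.cong\<close>)
  moreover have "(\<Prod>e\<in>E - X. x e) = (\<Prod>e\<in>J - X. x e) * (\<Prod>e\<in>E - X - J. x e)"
  proof -
    have "(\<Prod>e\<in>E - X. x e) = (\<Prod>e\<in>(J - X) \<union> (E - X - J). x e)"
      by (rule arg_cong[OF e2])
    also have "\<dots> = (\<Prod>e\<in>J - X. x e) * (\<Prod>e\<in>E - X - J. x e)"
      by (rule prod.union_disjoint) (use f in auto)
    finally show ?thesis .
  qed
  moreover have "(\<Prod>e\<in>E - X - J. x e) * (\<Prod>e\<in>E - X - J. 1 / x e) = 1"
  proof -
    have "(\<Prod>e\<in>E - X - J. x e) * (\<Prod>e\<in>E - X - J. 1 / x e) = (\<Prod>e\<in>E - X - J. x e * (1 / x e))"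
      by (rule prod.distrib[symmetric])
    also have "\<dots> = 1"
    proof (rule prod.neutral, rule ballI)
      fix e assume "e \<in> E - X - J"
      hence "x e \<noteq> 0" using nz by blast
      thus "x e * (1 / x e) = 1" by simp
    qed
    finally show ?thesis .
  qed
  moreover have "(\<Prod>e\<in>(J - X) \<union> (X - J). x e) = (\<Prod>e\<in>J - X. x e) * (\<Prod>e\<in>X - J. x e)"
    by (subst prod.union_disjoint) (use f in auto)
  ultimately show ?thesis
    by (metis (no_types, lifting) mult.assoc mult.commute mult.right_neutral)
qed

theorem lemma4p6:
  fixes E :: "'a set" and Bs :: "'a set set"
  assumes "regular_delta_matroid E Bs"
  shows "hurwitz_stable E (basis_gen_poly Bs)"
proof -
  obtain A :: "'a \<Rightarrow> 'a \<Rightarrow> real" and X where ev: "even_delta_matroid E Bs"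
    and skew: "\<forall>i\<in>E. \<forall>j\<in>E. A i j = - A j i"
    and minors: "\<forall>I. I \<subseteq> E \<longrightarrow> principal_minor A I \<in> {0, 1, -1}"
    and BsD: "Bs = twist (DA_bases E A) X"
    using assms unfolding regular_delta_matroid_def by blast
  have fin: "finite E" and ne: "Bs \<noteq> {}" and sub: "\<forall>B\<in>Bs. B \<subseteq> E"
    using ev unfolding even_delta_matroid_def delta_matroid_def by auto
  define D where "D = DA_bases E A"
  have X: "X \<subseteq> E"
  proof -
    obtain B where B: "B \<in> Bs" using ne by blast
    then obtain J where J: "J \<in> D" "B = (J - X) \<union> (X - J)" using BsD unfolding twist_def D_def by blast
    have "J \<subseteq> E" using J(1) unfolding D_def DA_bases_def by simp
    moreover have "B \<subseteq> E" using sub B by blast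
    ultimately show ?thesis using J(2) by blast
  qed
  have Dsub: "D \<subseteq> Pow E" unfolding D_def DA_bases_def by blast
  have finD: "finite D" using Dsub fin by (meson finite_Pow_iff finite_subset)
  have m01: "principal_minor A J \<in> {0, 1}" if J: "J \<subseteq> E" for J
  proof -
    have "finite J" using J fin finite_subset by auto
    moreover have "\<forall>i\<in>J. \<forall>j\<in>J. A i j = - A j i" using skew J by blast
    ultimately have "principal_minor A J \<ge> 0" by (rule pm_nonneg)
    thus ?thesis using minors J by auto
  qed
  show ?thesis unfolding hurwitz_stable_def
  proof (intro allI impI)
    fix x :: "'a \<Rightarrow> complex" assume pos: "\<forall>e\<in>E. 0 < Re (x e)"
    have nz: "\<forall>e\<in>E. x e \<noteq> 0" using pos by auto
    define z where "z = (\<lambda>e. if e \<in> X then x e else 1 / x e)"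
    have zpos: "\<forall>e\<in>E. 0 < Re (z e)"
    proof
      fix e assume e: "e \<in> E"
      have "0 < Re (1 / x e)"
      proof -
        have "0 < (Re (x e))^2 + (Im (x e))^2" using pos e by (intro add_pos_nonneg) auto
        thus ?thesis using pos e by (simp add: Re_divide)
      qed
      thus "0 < Re (z e)" using pos e unfolding z_def by simp
    qed
    have P: "principal_minor (\<lambda>i j. (if i = j then z i else 0) + complex_of_real (A i j)) E \<noteq> 0"
      by (rule pm_nonzero[OF fin skew zpos])
    have "principal_minor (\<lambda>i j. (if i = j then z i else 0) + complex_of_real (A i j)) E
        = (\<Sum>J\<in>Pow E. complex_of_real (principal_minor A J) * (\<Prod>i\<in>E-J. z i))"
      by (simp add: pm_expand[OF fin] pm_of_real)
    also have "\<dots> = (\<Sum>J\<in>D. (\<Prod>i\<in>E-J. z i))"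
    proof (rule sum.mono_neutral_cong_right[OF _ Dsub])
      show "finite (Pow E)" using fin by simp
      show "\<forall>J\<in>Pow E - D. complex_of_real (principal_minor A J) * (\<Prod>i\<in>E-J. z i) = 0"
        unfolding D_def DA_bases_def by auto
      fix J assume "J \<in> D"
      hence "J \<subseteq> E" "principal_minor A J \<noteq> 0" unfolding D_def DA_bases_def by auto
      hence "principal_minor A J = 1" using m01 by blast
      thus "complex_of_real (principal_minor A J) * (\<Prod>i\<in>E-J. z i) = (\<Prod>i\<in>E-J. z i)" by simp
    qed
    finally have Pz: "(\<Sum>J\<in>D. (\<Prod>i\<in>E-J. z i)) \<noteq> 0" using P by simp
    have inj: "inj_on (\<lambda>B. (B - X) \<union> (X - B)) D" unfolding inj_on_def by blast
    have "basis_gen_poly Bs x = (\<Sum>J\<in>D. \<Prod>e\<in>(J - X) \<union> (X - J). x e)"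
      unfolding basis_gen_poly_def BsD twist_def D_def[symmetric]
      by (subst sum.reindex[OF inj]) simp
    also have "\<dots> = (\<Sum>J\<in>D. (\<Prod>e\<in>E - X. x e) * (\<Prod>i\<in>E-J. z i))"
    proof (intro sum.cong refl)
      fix J assume "J \<in> D"
      hence "J \<subseteq> E" using Dsub by blast
      thus "(\<Prod>e\<in>(J - X) \<union> (X - J). x e) = (\<Prod>e\<in>E - X. x e) * (\<Prod>i\<in>E-J. z i)"
        unfolding z_def by (rule twist_term[OF fin _ X nz])
    qed
    also have "\<dots> = (\<Prod>e\<in>E - X. x e) * (\<Sum>J\<in>D. (\<Prod>i\<in>E-J. z i))"
      by (simp add: sum_distrib_left)
    also have "\<dots> \<noteq> 0" using Pz nz fin by (simp add: prod_zero_iff)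
    finally show "basis_gen_poly Bs x \<noteq> 0" .
  qed
qed

end
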